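(* Let $\Omega\subset\mathbb{R}^2$ be a convex domain with Lipschitz boundary, let $d_1,d_2>0$, $c_1,c_2\in\mathbb{R}$, and let $f,g:\mathbb{R}^2\to\mathbb{R}$ be globally Lipschitz continuous with Lipschitz constants $L_f,L_g$ and bounded above by constants $\beta_f,\beta_g$ respectively. Let $T_h$ be a quasi-uniform triangulation of $\Omega$ with mesh size $h$, let $S_h$ be the space of continuous functions on $\Omega$ that are piecewise linear on each element of $T_h$, and let $\tau>0$ be a timestep with $\tau\max\{\beta_f,\beta_g\}<1$. Given $u^n,v^n\in S_h$, let $(u^{n+1},v^{n+1})\in S_h\times S_h$ satisfy, for all $\phi_h\in S_h$, $$\Big(\tfrac{u^{n+1}-u^n}{\tau},\phi_h\Big)+d_1(\nabla u^{n+1},\nabla\phi_h)=(c_1,\phi_h)+(f(u^{n+1},v^{n+1})u^{n+1},\phi_h),$$ $$\Big(\tfrac{v^{n+1}-v^n}{\tau},\phi_h\Big)+d_2(\nabla v^{n+1},\nabla\phi_h)=(c_2,\phi_h)+(g(u^{n+1},v^{n+1})v^{n+1},\phi_h),$$ and define Picard iterates $(u_k,v_k)\in S_h\times S_h$, $k\ge 0$, by requiring $(u_{k+1},v_{k+1})$ to satisfy, for all $\phi_h\in S_h$, $$\Big(\tfrac{u_{k+1}-u^n}{\tau},\phi_h\Big)+d_1(\nabla u_{k+1},\nabla\phi_h)=(c_1,\phi_h)+(f(u_k,v_k)u_{k+1},\phi_h),$$ $$\Big(\tfrac{v_{k+1}-v^n}{\tau},\phi_h\Big)+d_2(\nabla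 v_{k+1},\nabla\phi_h)=(c_2,\phi_h)+(g(u_k,v_k)v_{k+1},\phi_h).$$ Assume that $u$ and $v$ (the iterates and the discrete solution) remain positive, and that the fully discrete solution $\xi^{n+1}=(u^{n+1},v^{n+1})$ approximates the exact solution $\Xi=(U,V)$ of the system $\partial_t u-d_1\nabla^2 u=c_1+f(u,v)u$, $\partial_t v-d_2\nabla^2 v=c_2+g(u,v)v$ (homogeneous Neumann boundary conditions) at time $t^{n+1}$ with $\|\Xi(t^{n+1})-\xi^{n+1}\|_\infty\le C'(\Xi)(h^2+\tau)$. Then, writing $\xi_k=(u_k,v_k)$, $L=\max\{L_f,L_g\}$ and $\beta=\max\{\beta_f,\beta_g\}$, there are constants $C,C'$ (independent of $k$) such that $$\|\xi_{k+1}-\xi^{n+1}\|\le \lambda\,\|\xi_k-\xi^{n+1}\|,\qquad \lambda:=CL\frac{\tau}{1-\tau\beta}\big(1+C'(\tau+h^2)\big),$$ so that $\lambda<1$ for sufficiently small $\tau$ and $h$ (hence the Picard iteration converges to $(u^{n+1},v^{n+1})$), and $\lambda\to0$ as $\tau\to0$ and $h\to0$ simultaneously.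
   Context: $(\cdot,\cdot)$ denotes the $L_2(\Omega)$ inner product and $\|\cdot\|$ the $L_2(\Omega)$ norm; for a pair $\xi=(u,v)$, $\|\xi\|$ is bounded by $\|u\|+\|v\|$, and $\|\cdot\|_\infty$ denotes the $L_\infty$ norm. The scheme is the backward Euler finite element discretisation of the reaction-diffusion system, and the Picard iteration linearises the reaction terms by evaluating $f,g$ at the previous iterate. *)

theory Defs
  imports "HOL-Analysis.Analysis"
begin

definition l2_inner :: "(real^2) set \<Rightarrow> (real^2 \<Rightarrow> real) \<Rightarrow> (real^2 \<Rightarrow> real) \<Rightarrow> real" where
  "l2_inner \<Omega> w \<phi> = (LINT x:\<Omega>|lebesgue. w x * \<phi> x)"

definition l2_norm :: "(real^2) set \<Rightarrow> (real^2 \<Rightarrow> real) \<Rightarrow> real" where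
  "l2_norm \<Omega> w = sqrt (l2_inner \<Omega> w w)"

definition pair_l2_norm :: "(real^2) set \<Rightarrow> (real^2 \<Rightarrow> real) \<Rightarrow> (real^2 \<Rightarrow> real) \<Rightarrow> real" where
  "pair_l2_norm \<Omega> u v = sqrt ((l2_norm \<Omega> u)\<^sup>2 + (l2_norm \<Omega> v)\<^sup>2)"

definition grad :: "(real^2 \<Rightarrow> real) \<Rightarrow> real^2 \<Rightarrow> real^2" where
  "grad w x = (\<chi> i. frechet_derivative w (at x) (axis i 1))"

definition grad_inner :: "(real^2) set \<Rightarrow> (real^2 \<Rightarrow> real) \<Rightarrow> (real^2 \<Rightarrow> real) \<Rightarrow> real" where
  "grad_inner \<Omega> w \<phi> = (LINT x:\<Omega>|lebesgue. grad w x \<bullet> grad \<phi> x)"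

definition laplacian :: "(real^2 \<Rightarrow> real) \<Rightarrow> real^2 \<Rightarrow> real" where
  "laplacian w x = (\<Sum>i\<in>UNIV. frechet_derivative (\<lambda>y. grad w y $ i) (at x) (axis i 1))"

definition is_triangle :: "(real^2) set \<Rightarrow> bool" where
  "is_triangle K = (\<exists>a b c. \<not> collinear {a, b, c} \<and> K = convex hull {a, b, c})"

definition vertices :: "(real^2) set \<Rightarrow> (real^2) set" where
  "vertices K = {x. x extreme_point_of K}"

text \<open>Conforming triangulation: two distinct triangles meet in the convex hull of a set of
  common vertices (empty, a common vertex or a common edge).\<close>
definition conforming_triangulation :: "(real^2) set \<Rightarrow> (real^2) set set \<Rightarrow> bool" where
  "conforming_triangulation \<Omega> \<T> =
     (finite \<T> \<and> \<T> \<noteq> {} \<and> (\<forall>K\<in>\<T>. is_triangle K) \<and> \<Union>\<T> = closure \<Omega> \<and>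
      (\<forall>K\<in>\<T>. \<forall>K'\<in>\<T>. K \<noteq> K' \<longrightarrow>
         (\<exists>S. S \<subseteq> vertices K \<inter> vertices K' \<and> K \<inter> K' = convex hull S)))"

definition mesh_size :: "(real^2) set set \<Rightarrow> real" where
  "mesh_size \<T> = Max (diameter ` \<T>)"

definition quasi_uniform :: "real \<Rightarrow> (real^2) set set \<Rightarrow> bool" where
  "quasi_uniform \<sigma> \<T> = (\<forall>K\<in>\<T>. \<exists>c. ball c (mesh_size \<T> / \<sigma>) \<subseteq> K)"

definition P1_space :: "(real^2) set \<Rightarrow> (real^2) set set \<Rightarrow> (real^2 \<Rightarrow> real) set" where
  "P1_space \<Omega> \<T> = {w. continuous_on (closure \<Omega>) w \<and> (\<forall>x. x \<notin> closure \<Omega> \<longrightarrow> w x = 0) \<and>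
                      (\<forall>K\<in>\<T>. \<exists>a b. \<forall>x\<in>K. w x = a \<bullet> x + b)}"

definition fe_equation :: "(real^2) set \<Rightarrow> (real^2) set set \<Rightarrow> real \<Rightarrow> real \<Rightarrow> real \<Rightarrow>
     (real^2 \<Rightarrow> real) \<Rightarrow> (real^2 \<Rightarrow> real) \<Rightarrow> (real^2 \<Rightarrow> real) \<Rightarrow> bool" where
  "fe_equation \<Omega> \<T> \<tau> d c F w0 w1 =
     (\<forall>\<phi>\<in>P1_space \<Omega> \<T>.
        l2_inner \<Omega> (\<lambda>x. (w1 x - w0 x) / \<tau>) \<phi> + d * grad_inner \<Omega> w1 \<phi>
        = l2_inner \<Omega> (\<lambda>x. c) \<phi> + l2_inner \<Omega> (\<lambda>x. F x * w1 x) \<phi>)"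

definition twice_differentiable_on :: "(real^2) set \<Rightarrow> (real^2 \<Rightarrow> real) \<Rightarrow> bool" where
  "twice_differentiable_on \<Omega> w =
     ((\<forall>x\<in>\<Omega>. w differentiable (at x)) \<and>
      (\<forall>i. \<forall>x\<in>\<Omega>. (\<lambda>y. grad w y $ i) differentiable (at x)))"

definition outward_unit_normal :: "(real^2) set \<Rightarrow> real^2 \<Rightarrow> real^2 \<Rightarrow> bool" where
  "outward_unit_normal \<Omega> x \<nu> = (x \<in> frontier \<Omega> \<and> norm \<nu> = 1 \<and> (\<forall>y\<in>\<Omega>. \<nu> \<bullet> (y - x) \<le> 0))"

definition rd_neumann_solution ::
  "(real^2) set \<Rightarrow> real \<Rightarrow> real \<Rightarrow> real \<Rightarrow> real \<Rightarrow> real \<Rightarrow>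
   (real \<times> real \<Rightarrow> real) \<Rightarrow> (real \<times> real \<Rightarrow> real) \<Rightarrow>
   (real \<Rightarrow> real^2 \<Rightarrow> real) \<Rightarrow> (real \<Rightarrow> real^2 \<Rightarrow> real) \<Rightarrow> bool" where
  "rd_neumann_solution \<Omega> T d1 d2 c1 c2 f g U V =
     (continuous_on ({0..T} \<times> closure \<Omega>) (\<lambda>(t, x). U t x) \<and>
      continuous_on ({0..T} \<times> closure \<Omega>) (\<lambda>(t, x). V t x) \<and>
      (\<forall>t\<in>{0<..T}.
         twice_differentiable_on \<Omega> (U t) \<and> twice_differentiable_on \<Omega> (V t) \<and>
         (\<forall>x\<in>\<Omega>. \<exists>Ut Vt.
            ((\<lambda>s. U s x) has_real_derivative Ut) (at t within {0..T}) \<and>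
            ((\<lambda>s. V s x) has_real_derivative Vt) (at t within {0..T}) \<and>
            Ut - d1 * laplacian (U t) x = c1 + f (U t x, V t x) * U t x \<and>
            Vt - d2 * laplacian (V t) x = c2 + g (U t x, V t x) * V t x) \<and>
         (\<forall>x \<nu>. outward_unit_normal \<Omega> x \<nu> \<and> (\<forall>\<nu>'. outward_unit_normal \<Omega> x \<nu>' \<longrightarrow> \<nu>' = \<nu>) \<longrightarrow>
            ((\<lambda>y. grad (U t) y \<bullet> \<nu>) \<longlongrightarrow> 0) (at x within \<Omega>) \<and>
            ((\<lambda>y. grad (V t) y \<bullet> \<nu>) \<longlongrightarrow> 0) (at x within \<Omega>))))"

end

theory Submission
  imports Defs
begin

lemma grad_affine:
  assumes "open S" "x \<in> S" "\<And>y. y \<in> S \<Longrightarrow> w y = a \<bullet> y + b"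
  shows "grad w x = a"
proof -
  have "((\<lambda>y. a \<bullet> y + b) has_derivative (\<lambda>h. a \<bullet> h)) (at x)"
    by (auto intro!: derivative_eq_intros)
  then have "(w has_derivative (\<lambda>h. a \<bullet> h)) (at x)"
    by (rule has_derivative_transform_within_open[OF _ assms(1,2)]) (use assms(3) in auto)
  then have "frechet_derivative w (at x) = (\<lambda>h. a \<bullet> h)"
    by (metis frechet_derivative_at)
  then show ?thesis
    unfolding grad_def by (simp add: vec_eq_iff inner_axis)
qed

lemma P1_affine:
  assumes "w \<in> P1_space \<Omega> \<T>" "K \<in> \<T>"
  shows "\<exists>a b. \<forall>x\<in>K. w x = a \<bullet> x + b"
  using assms unfolding P1_space_def by auto

lemma P1_grad_const:
  assumes "w \<in> P1_space \<Omega> \<T>" "K \<in> \<T>"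
  shows "\<exists>a. \<forall>x\<in>interior K. grad w x = a"
proof -
  obtain a b where ab: "\<forall>x\<in>K. w x = a \<bullet> x + b" using P1_affine[OF assms] by blast
  show ?thesis
    by (rule exI[of _ a], intro ballI grad_affine[of "interior K"]) (use ab interior_subset in auto)
qed

lemma P1_diff:
  assumes "w1 \<in> P1_space \<Omega> \<T>" "w2 \<in> P1_space \<Omega> \<T>"
  shows "(\<lambda>x. w1 x - w2 x) \<in> P1_space \<Omega> \<T>"
proof -
  have "\<exists>a b. \<forall>x\<in>K. w1 x - w2 x = a \<bullet> x + b" if K: "K \<in> \<T>" for K
  proof -
    obtain a b where ab: "\<forall>x\<in>K. w1 x = a \<bullet> x + b" using P1_affine[OF assms(1) K] by blast
    obtain a' b' where ab': "\<forall>x\<in>K. w2 x = a' \<bullet> x + b'" using P1_affine[OF assms(2) K] by blast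
    show ?thesis
      by (rule exI[of _ "a - a'"], rule exI[of _ "b - b'"]) (simp add: ab ab' inner_diff_left)
  qed
  then show ?thesis using assms unfolding P1_space_def
    by (auto intro!: continuous_intros)
qed

lemma null_skeleton:
  assumes "conforming_triangulation \<Omega> \<T>"
  shows "\<Omega> - \<Union>(interior ` \<T>) \<in> null_sets lebesgue"
proof -
  have fin: "finite \<T>" and tri: "\<And>K. K \<in> \<T> \<Longrightarrow> is_triangle K" and un: "\<Union>\<T> = closure \<Omega>"
    using assms unfolding conforming_triangulation_def by auto
  have cl: "closed K" "convex K" if K: "K \<in> \<T>" for K
  proof -
    obtain a b c where "K = convex hull {a, b, c}" using tri[OF K] unfolding is_triangle_def by blast
    then show "closed K" "convex K"
      by (auto intro!: compact_imp_closed compact_convex_hull)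
  qed
  have "\<Omega> - \<Union>(interior ` \<T>) \<subseteq> \<Union>(frontier ` \<T>)"
  proof
    fix x assume x: "x \<in> \<Omega> - \<Union>(interior ` \<T>)"
    then obtain K where K: "K \<in> \<T>" "x \<in> K" using un closure_subset by blast
    then have "x \<in> frontier K" using x cl(1)[OF K(1)] by (auto simp: frontier_def)
    then show "x \<in> \<Union>(frontier ` \<T>)" using K by blast
  qed
  moreover have "negligible (\<Union>(frontier ` \<T>))"
    using fin cl by (auto intro!: negligible_Union negligible_convex_frontier)
  ultimately have "negligible (\<Omega> - \<Union>(interior ` \<T>))" by (rule negligible_subset[rotated])
  then show ?thesis by (simp add: negligible_iff_null_sets)
qed

lemma Omega_lmeas:
  assumes "open \<Omega>" "bounded \<Omega>"
  shows "\<Omega> \<in> sets lebesgue" "emeasure lebesgue \<Omega> < \<infinity>"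
proof -
  have "\<Omega> \<in> lmeasurable" using assms lmeasurable_open by blast
  then show "\<Omega> \<in> sets lebesgue" "emeasure lebesgue \<Omega> < \<infinity>" by (auto simp: fmeasurable_def)
qed

lemma grad_integrable:
  assumes "conforming_triangulation \<Omega> \<T>" "open \<Omega>" "bounded \<Omega>"
    and w: "w \<in> P1_space \<Omega> \<T>" and p: "p \<in> P1_space \<Omega> \<T>"
  shows "set_integrable lebesgue \<Omega> (\<lambda>x. grad w x \<bullet> grad p x)"
proof -
  have fin: "finite \<T>" using assms(1) unfolding conforming_triangulation_def by auto
  obtain A where A: "\<And>K x. K \<in> \<T> \<Longrightarrow> x \<in> interior K \<Longrightarrow> grad w x = A K"
    using P1_grad_const[OF w] by metis
  obtain B where B: "\<And>K x. K \<in> \<T> \<Longrightarrow> x \<in> interior K \<Longrightarrow> grad p x = B K"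
    using P1_grad_const[OF p] by metis
  define N where "N = \<Omega> - \<Union>(interior ` \<T>)"
  have N: "N \<in> null_sets lebesgue" unfolding N_def by (rule null_skeleton[OF assms(1)])
  define g where "g x = indicator \<Omega> x * ((\<Sum>K\<in>\<T>. indicator (interior K) x * (A K \<bullet> B K)) /
       (\<Sum>K\<in>\<T>. indicator (interior K) x))" for x :: "real^2"
  have Om: "\<Omega> \<in> sets lebesgue" "emeasure lebesgue \<Omega> < \<infinity>" using Omega_lmeas[OF assms(2,3)] by auto
  have intK: "interior K \<in> sets lebesgue" for K :: "(real^2) set"
    by (simp add: borel_open)
  have gm: "g \<in> borel_measurable lebesgue"
    unfolding g_def using Om(1) intK
    by (intro borel_measurable_times borel_measurable_divide borel_measurable_sum borel_measurable_indicator) auto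
  have eq: "g x = indicator \<Omega> x *\<^sub>R (grad w x \<bullet> grad p x)" if xN: "x \<notin> N" for x
  proof (cases "x \<in> \<Omega>")
    case False then show ?thesis by (simp add: g_def)
  next
    case True
    then obtain K0 where K0: "K0 \<in> \<T>" "x \<in> interior K0" using xN unfolding N_def by blast
    have num: "(\<Sum>K\<in>\<T>. indicator (interior K) x * (A K \<bullet> B K)) =
        (\<Sum>K\<in>\<T>. indicator (interior K) x * (grad w x \<bullet> grad p x))"
      by (rule sum.cong) (auto simp: A B split: split_indicator)
    have "(\<Sum>K\<in>\<T>. indicator (interior K) x :: real) \<ge> indicator (interior K0) x"
      using fin K0 by (intro member_le_sum) auto
    then have pos: "(\<Sum>K\<in>\<T>. indicator (interior K) x :: real) > 0" using K0 by simp
    show ?thesis using True pos unfolding g_def num sum_distrib_right[symmetric] by simp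
  qed
  have ae: "AE x in lebesgue. g x = indicator \<Omega> x *\<^sub>R (grad w x \<bullet> grad p x)"
    using AE_not_in[OF N] by eventually_elim (rule eq)
  have meas: "(\<lambda>x. indicator \<Omega> x *\<^sub>R (grad w x \<bullet> grad p x)) \<in> borel_measurable lebesgue"
    by (rule borel_measurable_AE[OF gm ae])
  define Bd where "Bd = (\<Sum>K\<in>\<T>. \<bar>A K \<bullet> B K\<bar>)"
  have bnd: "norm (indicator \<Omega> x *\<^sub>R (grad w x \<bullet> grad p x)) \<le> Bd" if xN: "x \<notin> N" "x \<in> \<Omega>" for x
  proof -
    obtain K0 where K0: "K0 \<in> \<T>" "x \<in> interior K0" using xN unfolding N_def by blast
    have "\<bar>A K0 \<bullet> B K0\<bar> \<le> Bd" unfolding Bd_def using fin K0 by (intro member_le_sum) auto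
    then show ?thesis using xN K0 A B by simp
  qed
  show ?thesis unfolding set_integrable_def
    apply (rule integrableI_bounded_set[OF Om(1) meas Om(2), where B=Bd])
    using AE_not_in[OF N] apply eventually_elim using bnd apply blast
    by auto
qed

lemma grad_diff_nonneg:
  assumes "conforming_triangulation \<Omega> \<T>" "open \<Omega>" "bounded \<Omega>"
    and w1: "w1 \<in> P1_space \<Omega> \<T>" and w2: "w2 \<in> P1_space \<Omega> \<T>"
  shows "grad_inner \<Omega> w1 (\<lambda>x. w1 x - w2 x) - grad_inner \<Omega> w2 (\<lambda>x. w1 x - w2 x) \<ge> 0"
proof -
  define e where "e = (\<lambda>x. w1 x - w2 x)"
  have e: "e \<in> P1_space \<Omega> \<T>" unfolding e_def by (rule P1_diff[OF w1 w2])
  have i1: "set_integrable lebesgue \<Omega> (\<lambda>x. grad w1 x \<bullet> grad e x)"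
    and i2: "set_integrable lebesgue \<Omega> (\<lambda>x. grad w2 x \<bullet> grad e x)"
    using grad_integrable assms e by blast+
  define N where "N = \<Omega> - \<Union>(interior ` \<T>)"
  have N: "N \<in> null_sets lebesgue" unfolding N_def by (rule null_skeleton[OF assms(1)])
  have pt: "0 \<le> indicator \<Omega> x *\<^sub>R (grad w1 x \<bullet> grad e x - grad w2 x \<bullet> grad e x)" if xN: "x \<notin> N" for x
  proof (cases "x \<in> \<Omega>")
    case False then show ?thesis by simp
  next
    case True
    then obtain K where K: "K \<in> \<T>" "x \<in> interior K" using xN unfolding N_def by blast
    obtain a b where ab: "\<forall>y\<in>K. w1 y = a \<bullet> y + b" using P1_affine[OF w1 K(1)] by blast
    obtain a' b' where ab': "\<forall>y\<in>K. w2 y = a' \<bullet> y + b'" using P1_affine[OF w2 K(1)] by blast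
    have g1: "grad w1 x = a" by (rule grad_affine[of "interior K"]) (use K ab interior_subset in auto)
    have g2: "grad w2 x = a'" by (rule grad_affine[of "interior K"]) (use K ab' interior_subset in auto)
    have ge: "grad e x = a - a'"
      by (rule grad_affine[of "interior K" _ _ _ "b - b'"]) (use K in \<open>auto simp: e_def inner_diff_left ab ab' dest!: interior_subset[THEN subsetD]\<close>)
    have "grad w1 x \<bullet> grad e x - grad w2 x \<bullet> grad e x = (a - a') \<bullet> (a - a')"
      by (simp add: g1 g2 ge inner_diff_left)
    then show ?thesis using True by simp
  qed
  have "0 \<le> (LINT x:\<Omega>|lebesgue. grad w1 x \<bullet> grad e x - grad w2 x \<bullet> grad e x)"
    unfolding set_lebesgue_integral_def
    apply (rule integral_nonneg_AE)
    using AE_not_in[OF N] apply eventually_elim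
    using pt by blast
  also have "\<dots> = grad_inner \<Omega> w1 e - grad_inner \<Omega> w2 e"
    unfolding grad_inner_def by (rule set_integral_diff(2)[OF i1 i2])
  finally show ?thesis unfolding e_def .
qed

lemma cont_integrable:
  assumes "open \<Omega>" "bounded \<Omega>" "continuous_on (closure \<Omega>) p"
  shows "set_integrable lebesgue \<Omega> (p :: real^2 \<Rightarrow> real)"
proof -
  have "compact (closure \<Omega>)" using assms by (simp add: compact_closure)
  then have i: "integrable lborel (\<lambda>x. indicator (closure \<Omega>) x *\<^sub>R p x)"
    by (rule borel_integrable_compact[OF _ assms(3)])
  have "integrable lebesgue (\<lambda>x. indicator (closure \<Omega>) x *\<^sub>R p x)"
    using integrable_completion[of "\<lambda>x. indicator (closure \<Omega>) x *\<^sub>R p x" lborel] i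
    by (simp add: borel_measurable_integrable)
  then have "set_integrable lebesgue (closure \<Omega>) p" unfolding set_integrable_def .
  then show ?thesis
    by (rule set_integrable_subset) (use Omega_lmeas[OF assms(1,2)] closure_subset in auto)
qed

lemma cs_real:
  fixes I P Q :: real
  assumes "I \<ge> 0" "P \<ge> 0" "Q \<ge> 0" and h: "\<And>s. s > 0 \<Longrightarrow> 2 * I \<le> s * P + Q / s"
  shows "I \<le> sqrt P * sqrt Q"
proof (cases "P > 0 \<and> Q > 0")
  case True
  define s where "s = sqrt Q / sqrt P"
  have sp: "s > 0" using True by (simp add: s_def)
  have pp: "sqrt P > 0" "sqrt Q > 0" using True by auto
  have P: "P = sqrt P * sqrt P" and Q: "Q = sqrt Q * sqrt Q" using True by simp_all
  have gen1: "b / a * (a * a) = b * a" and gen2: "(b * b) / (b / a) = b * a" if "a > 0" "b > 0" for a b :: real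
    using that by (simp_all add: field_simps power2_eq_square)
  have "s * P = sqrt Q * sqrt P"
    unfolding s_def using gen1[OF pp(1) pp(2)] P by metis
  moreover have "Q / s = sqrt Q * sqrt P"
    unfolding s_def using gen2[OF pp(1) pp(2)] Q by metis
  ultimately show ?thesis using h[OF sp] by (simp add: mult.commute)
next
  case False
  show ?thesis
  proof (rule ccontr)
    assume c: "\<not> ?thesis"
    then have Ipos: "I > 0" using assms False by auto
    show False
    proof (cases "P = 0")
      case True
      define s where "s = (Q + 1) / I"
      have sp: "s > 0" using Ipos assms by (simp add: s_def)
      have "2 * I \<le> Q / s" using h[OF sp] True by simp
      also have "Q / s = Q * I / (Q + 1)" using Ipos assms by (simp add: s_def)
      also have "\<dots> < I" using Ipos assms by (simp add: field_simps)
      finally show False using Ipos by simp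
    next
      case False
      then have Q0: "Q = 0" using \<open>\<not> (P > 0 \<and> Q > 0)\<close> assms by auto
      define s where "s = I / (P + 1)"
      have sp: "s > 0" using Ipos assms by (simp add: s_def)
      have "2 * I \<le> s * P" using h[OF sp] Q0 by simp
      also have "s * P = I * P / (P + 1)" by (simp add: s_def)
      also have "\<dots> < I" using Ipos assms by (simp add: field_simps)
      finally show False using Ipos by simp
    qed
  qed
qed

lemma set_int_nonneg:
  fixes f :: "_ \<Rightarrow> real"
  assumes "\<And>x. x \<in> A \<Longrightarrow> 0 \<le> f x"
  shows "0 \<le> (LINT x:A|M. f x)"
  unfolding set_lebesgue_integral_def
  by (rule integral_nonneg_AE) (use assms in \<open>auto split: split_indicator\<close>)

lemma cs_int:
  fixes \<Omega> :: "(real^2) set" and p q :: "real^2 \<Rightarrow> real"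
  assumes "open \<Omega>" "bounded \<Omega>" "continuous_on (closure \<Omega>) p" "continuous_on (closure \<Omega>) q"
  shows "(LINT x:\<Omega>|lebesgue. \<bar>p x\<bar> * \<bar>q x\<bar>) \<le>
     sqrt (LINT x:\<Omega>|lebesgue. p x * p x) * sqrt (LINT x:\<Omega>|lebesgue. q x * q x)"
proof (rule cs_real)
  have ipq: "set_integrable lebesgue \<Omega> (\<lambda>x. \<bar>p x\<bar> * \<bar>q x\<bar>)"
    and ipp: "set_integrable lebesgue \<Omega> (\<lambda>x. p x * p x)"
    and iqq: "set_integrable lebesgue \<Omega> (\<lambda>x. q x * q x)"
    by (intro cont_integrable[OF assms(1,2)] continuous_intros assms(3,4))+
  show "0 \<le> (LINT x:\<Omega>|lebesgue. \<bar>p x\<bar> * \<bar>q x\<bar>)"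
    by (rule set_int_nonneg) auto
  show "0 \<le> (LINT x:\<Omega>|lebesgue. p x * p x)"
    by (rule set_int_nonneg) auto
  show "0 \<le> (LINT x:\<Omega>|lebesgue. q x * q x)"
    by (rule set_int_nonneg) auto
  fix s :: real assume s: "s > 0"
  have "2 * (LINT x:\<Omega>|lebesgue. \<bar>p x\<bar> * \<bar>q x\<bar>) = (LINT x:\<Omega>|lebesgue. 2 * (\<bar>p x\<bar> * \<bar>q x\<bar>))"
    by simp
  also have "\<dots> \<le> (LINT x:\<Omega>|lebesgue. s * (p x * p x) + (q x * q x) / s)"
  proof (rule set_integral_mono)
    show "set_integrable lebesgue \<Omega> (\<lambda>x. 2 * (\<bar>p x\<bar> * \<bar>q x\<bar>))" using ipq by auto
    show "set_integrable lebesgue \<Omega> (\<lambda>x. s * (p x * p x) + q x * q x / s)" using ipp iqq by auto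
    fix x
    have gen: "(s * a - b)\<^sup>2 / s = s * (a * a) + b * b / s - 2 * (a * b)" for a b :: real
      using s by (simp add: field_simps power2_eq_square)
    have "0 \<le> (s * \<bar>p x\<bar> - \<bar>q x\<bar>)\<^sup>2 / s" using s by simp
    also have "(s * \<bar>p x\<bar> - \<bar>q x\<bar>)\<^sup>2 / s = s * (p x * p x) + q x * q x / s - 2 * (\<bar>p x\<bar> * \<bar>q x\<bar>)"
      unfolding gen abs_mult_self_eq ..
    finally show "2 * (\<bar>p x\<bar> * \<bar>q x\<bar>) \<le> s * (p x * p x) + q x * q x / s" by simp
  qed
  also have "\<dots> = s * (LINT x:\<Omega>|lebesgue. p x * p x) + (LINT x:\<Omega>|lebesgue. q x * q x) / s"
    using ipp iqq by (subst set_integral_add(2)) auto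
  finally show "2 * (LINT x:\<Omega>|lebesgue. \<bar>p x\<bar> * \<bar>q x\<bar>) \<le>
      s * (LINT x:\<Omega>|lebesgue. p x * p x) + (LINT x:\<Omega>|lebesgue. q x * q x) / s" .
qed

lemma P1_cont: "w \<in> P1_space \<Omega> \<T> \<Longrightarrow> continuous_on (closure \<Omega>) w"
  unfolding P1_space_def by auto

lemma component:
  fixes \<Omega> :: "(real^2) set" and w0 w1 wk F Fk R :: "real^2 \<Rightarrow> real"
  assumes tri: "conforming_triangulation \<Omega> \<T>" and op: "open \<Omega>" and bd: "bounded \<Omega>"
    and d: "d > 0" and tau: "\<tau> > 0"
    and P0: "w0 \<in> P1_space \<Omega> \<T>" and P1: "w1 \<in> P1_space \<Omega> \<T>" and Pk: "wk \<in> P1_space \<Omega> \<T>"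
    and cF: "continuous_on (closure \<Omega>) F" and cFk: "continuous_on (closure \<Omega>) Fk"
    and cR: "continuous_on (closure \<Omega>) R"
    and eq1: "fe_equation \<Omega> \<T> \<tau> d c F w0 w1"
    and eq2: "fe_equation \<Omega> \<T> \<tau> d c Fk w0 wk"
    and bb: "\<And>x. x \<in> \<Omega> \<Longrightarrow> Fk x \<le> \<beta>"
    and bL: "\<And>x. x \<in> \<Omega> \<Longrightarrow> \<bar>Fk x - F x\<bar> \<le> Lm * R x"
    and bM: "\<And>x. x \<in> \<Omega> \<Longrightarrow> \<bar>w1 x\<bar> \<le> M"
    and Lm: "Lm \<ge> 0" and M: "M \<ge> 0"
  shows "(1 / \<tau> - \<beta>) * sqrt (LINT x:\<Omega>|lebesgue. (wk x - w1 x) * (wk x - w1 x))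
         \<le> Lm * M * sqrt (LINT x:\<Omega>|lebesgue. R x * R x)"
proof -
  define e where "e = (\<lambda>x. wk x - w1 x)"
  have Pe: "e \<in> P1_space \<Omega> \<T>" unfolding e_def by (rule P1_diff[OF Pk P1])
  have c0: "continuous_on (closure \<Omega>) w0" and c1: "continuous_on (closure \<Omega>) w1"
    and ck: "continuous_on (closure \<Omega>) wk" and ce: "continuous_on (closure \<Omega>) e"
    using P0 P1 Pk Pe by (auto intro: P1_cont)
  note CI = cont_integrable[OF op bd]
  have E1: "l2_inner \<Omega> (\<lambda>x. (w1 x - w0 x) / \<tau>) e + d * grad_inner \<Omega> w1 e
        = l2_inner \<Omega> (\<lambda>x. c) e + l2_inner \<Omega> (\<lambda>x. F x * w1 x) e"
    using eq1 Pe unfolding fe_equation_def by blast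
  have E2: "l2_inner \<Omega> (\<lambda>x. (wk x - w0 x) / \<tau>) e + d * grad_inner \<Omega> wk e
        = l2_inner \<Omega> (\<lambda>x. c) e + l2_inner \<Omega> (\<lambda>x. Fk x * wk x) e"
    using eq2 Pe unfolding fe_equation_def by blast
  have G: "grad_inner \<Omega> wk e - grad_inner \<Omega> w1 e \<ge> 0"
    unfolding e_def by (rule grad_diff_nonneg[OF tri op bd Pk P1])
  define a1 where "a1 = (LINT x:\<Omega>|lebesgue. (w1 x - w0 x) / \<tau> * e x)"
  define a2 where "a2 = (LINT x:\<Omega>|lebesgue. (wk x - w0 x) / \<tau> * e x)"
  define f1 where "f1 = (LINT x:\<Omega>|lebesgue. F x * w1 x * e x)"
  define f2 where "f2 = (LINT x:\<Omega>|lebesgue. Fk x * wk x * e x)"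
  have "a2 - a1 - f2 + f1 = - d * (grad_inner \<Omega> wk e - grad_inner \<Omega> w1 e)"
    using E1 E2 unfolding l2_inner_def a1_def a2_def f1_def f2_def by (simp add: algebra_simps)
  also have "\<dots> \<le> 0" using d G by (simp add: mult_nonneg_nonneg)
  finally have le0: "a2 - a1 - f2 + f1 \<le> 0" .
  have i1: "set_integrable lebesgue \<Omega> (\<lambda>x. (w1 x - w0 x) / \<tau> * e x)"
    using tau by (intro CI continuous_intros c0 c1 ck ce cF cFk cR; simp)
  have i2: "set_integrable lebesgue \<Omega> (\<lambda>x. (wk x - w0 x) / \<tau> * e x)"
    using tau by (intro CI continuous_intros c0 c1 ck ce cF cFk cR; simp)
  have i3: "set_integrable lebesgue \<Omega> (\<lambda>x. F x * w1 x * e x)"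
    using tau by (intro CI continuous_intros c0 c1 ck ce cF cFk cR; simp)
  have i4: "set_integrable lebesgue \<Omega> (\<lambda>x. Fk x * wk x * e x)"
    using tau by (intro CI continuous_intros c0 c1 ck ce cF cFk cR; simp)
  have i5: "set_integrable lebesgue \<Omega> (\<lambda>x. e x * e x)"
    using tau by (intro CI continuous_intros c0 c1 ck ce cF cFk cR; simp)
  have i6: "set_integrable lebesgue \<Omega> (\<lambda>x. \<bar>R x\<bar> * \<bar>e x\<bar>)"
    using tau by (intro CI continuous_intros c0 c1 ck ce cF cFk cR; simp)
  define \<Phi> where "\<Phi> x = (wk x - w0 x) / \<tau> * e x - (w1 x - w0 x) / \<tau> * e x - Fk x * wk x * e x + F x * w1 x * e x" for x
  have iPhi: "set_integrable lebesgue \<Omega> \<Phi>"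
    unfolding \<Phi>_def by (intro set_integral_add(1) set_integral_diff(1) i1 i2 i3 i4)
  have IPhi: "(LINT x:\<Omega>|lebesgue. \<Phi> x) = a2 - a1 - f2 + f1"
  proof -
    note s1 = set_integral_diff(1)[OF i2 i1]
    note s2 = set_integral_diff(1)[OF s1 i4]
    show ?thesis
      unfolding \<Phi>_def a1_def a2_def f1_def f2_def
      unfolding set_integral_add(2)[OF s2 i3] set_integral_diff(2)[OF s1 i4] set_integral_diff(2)[OF i2 i1] ..
  qed
  define \<gamma> where "\<gamma> = 1 / \<tau> - \<beta>"
  define K where "K = Lm * M"
  have K: "K \<ge> 0" unfolding K_def using Lm M by simp
  have pw: "\<gamma> * (e x * e x) - K * (\<bar>R x\<bar> * \<bar>e x\<bar>) \<le> \<Phi> x" if x: "x \<in> \<Omega>" for x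
  proof -
    have phi: "\<Phi> x = e x * e x / \<tau> - Fk x * (e x * e x) - (Fk x - F x) * w1 x * e x"
      using tau unfolding \<Phi>_def e_def by (simp add: field_simps)
    have "(\<beta> - Fk x) * (e x * e x) \<ge> 0" using bb[OF x] by simp
    then have A: "\<gamma> * (e x * e x) \<le> e x * e x / \<tau> - Fk x * (e x * e x)"
      unfolding \<gamma>_def by (simp add: algebra_simps)
    have "(Fk x - F x) * w1 x * e x \<le> \<bar>Fk x - F x\<bar> * \<bar>w1 x\<bar> * \<bar>e x\<bar>"
      by (metis abs_ge_self abs_mult)
    also have "\<dots> \<le> (Lm * \<bar>R x\<bar>) * M * \<bar>e x\<bar>"
    proof (intro mult_right_mono mult_mono)
      show "\<bar>Fk x - F x\<bar> \<le> Lm * \<bar>R x\<bar>" using bL[OF x] Lm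
        by (meson abs_ge_self mult_left_mono order_trans)
    qed (use bM[OF x] Lm in auto)
    also have "\<dots> = K * (\<bar>R x\<bar> * \<bar>e x\<bar>)" unfolding K_def by simp
    finally show ?thesis using A phi by linarith
  qed
  have ilow: "set_integrable lebesgue \<Omega> (\<lambda>x. \<gamma> * (e x * e x) - K * (\<bar>R x\<bar> * \<bar>e x\<bar>))"
    using i5 i6 by auto
  define A where "A = (LINT x:\<Omega>|lebesgue. e x * e x)"
  define P where "P = (LINT x:\<Omega>|lebesgue. R x * R x)"
  have A0: "A \<ge> 0" unfolding A_def by (rule set_int_nonneg) simp
  have P0: "P \<ge> 0" unfolding P_def by (rule set_int_nonneg) simp
  have "\<gamma> * A - K * (LINT x:\<Omega>|lebesgue. \<bar>R x\<bar> * \<bar>e x\<bar>)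
        = (LINT x:\<Omega>|lebesgue. \<gamma> * (e x * e x) - K * (\<bar>R x\<bar> * \<bar>e x\<bar>))"
    unfolding A_def using i5 i6 by (subst set_integral_diff(2)) auto
  also have "\<dots> \<le> (LINT x:\<Omega>|lebesgue. \<Phi> x)"
    by (rule set_integral_mono[OF ilow iPhi pw])
  finally have "\<gamma> * A \<le> K * (LINT x:\<Omega>|lebesgue. \<bar>R x\<bar> * \<bar>e x\<bar>)"
    using IPhi le0 by linarith
  also have "\<dots> \<le> K * (sqrt P * sqrt A)"
    unfolding P_def A_def by (intro mult_left_mono cs_int op bd cR ce K)
  finally have main: "\<gamma> * A \<le> K * sqrt P * sqrt A" by (simp add: mult.assoc)
  have "\<gamma> * sqrt A \<le> K * sqrt P"
  proof (cases "A = 0")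
    case True then show ?thesis using K P0 by simp
  next
    case False
    then have sA: "sqrt A > 0" using A0 by simp
    have "A = sqrt A * sqrt A" using A0 by simp
    then have "(\<gamma> * sqrt A) * sqrt A \<le> (K * sqrt P) * sqrt A" using main by (metis mult.assoc)
    then show ?thesis using sA by (simp add: mult_le_cancel_right)
  qed
  then show ?thesis unfolding \<gamma>_def K_def A_def P_def e_def .
qed

lemma final_real:
  fixes A B P Lm M Cp s \<tau> \<beta> :: real
  assumes A: "A \<ge> 0" and B: "B \<ge> 0" and P: "P \<ge> 0" and Lm: "Lm \<ge> 0" and M: "M \<ge> 0"
    and Cp: "Cp \<ge> 0" and s: "s \<ge> 0" and tau: "\<tau> > 0" and tb: "\<tau> * \<beta> < 1"
    and hA: "(1 / \<tau> - \<beta>) * sqrt A \<le> Lm * (M + Cp * s) * sqrt P"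
    and hB: "(1 / \<tau> - \<beta>) * sqrt B \<le> Lm * (M + Cp * s) * sqrt P"
  shows "sqrt (A + B) \<le> (sqrt 2 * (M + 1) * Lm * (\<tau> / (1 - \<tau> * \<beta>)) * (1 + Cp * s)) * sqrt P"
proof -
  define \<gamma> where "\<gamma> = 1 / \<tau> - \<beta>"
  have g: "\<gamma> = (1 - \<tau> * \<beta>) / \<tau>" unfolding \<gamma>_def using tau by (simp add: field_simps)
  have gpos: "\<gamma> > 0" unfolding g using tau tb by simp
  define Q where "Q = Lm * (M + Cp * s) * sqrt P"
  have Q0: "Q \<ge> 0" unfolding Q_def using Lm M Cp s P by simp
  have sa: "sqrt A \<le> Q / \<gamma>" using hA gpos unfolding Q_def \<gamma>_def by (simp add: field_simps mult.commute)
  have sb: "sqrt B \<le> Q / \<gamma>" using hB gpos unfolding Q_def \<gamma>_def by (simp add: field_simps mult.commute)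
  have "A = (sqrt A)\<^sup>2" using A by simp
  also have "\<dots> \<le> (Q / \<gamma>)\<^sup>2" using sa A by (intro power_mono) auto
  finally have a2: "A \<le> (Q / \<gamma>)\<^sup>2" .
  have "B = (sqrt B)\<^sup>2" using B by simp
  also have "\<dots> \<le> (Q / \<gamma>)\<^sup>2" using sb B by (intro power_mono) auto
  finally have b2: "B \<le> (Q / \<gamma>)\<^sup>2" .
  have "sqrt (A + B) \<le> sqrt (2 * (Q / \<gamma>)\<^sup>2)" using a2 b2 by simp
  also have "\<dots> = sqrt 2 * (Q / \<gamma>)" using Q0 gpos by (simp add: real_sqrt_mult)
  also have "Q / \<gamma> = (Lm * (\<tau> / (1 - \<tau> * \<beta>)) * sqrt P) * (M + Cp * s)"
    unfolding Q_def g using tau tb by (simp add: field_simps)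
  also have "\<dots> \<le> (Lm * (\<tau> / (1 - \<tau> * \<beta>)) * sqrt P) * ((M + 1) * (1 + Cp * s))"
  proof (rule mult_left_mono)
    show "M + Cp * s \<le> (M + 1) * (1 + Cp * s)" using M Cp s by (simp add: algebra_simps)
    show "0 \<le> Lm * (\<tau> / (1 - \<tau> * \<beta>)) * sqrt P" using Lm tau tb P by simp
  qed
  finally have "sqrt (A + B) \<le> sqrt 2 * (Lm * (\<tau> / (1 - \<tau> * \<beta>)) * sqrt P * ((M + 1) * (1 + Cp * s)))"
    by (simp add: mult_left_mono)
  then show ?thesis by (simp add: mult_ac)
qed

theorem mainTheorem1:
  fixes \<Omega> :: "(real^2) set"
    and T d1 d2 c1 c2 L\<^sub>f L\<^sub>g \<beta>\<^sub>f \<beta>\<^sub>g C' \<sigma> :: real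
    and f g :: "real \<times> real \<Rightarrow> real"
    and U V :: "real \<Rightarrow> real^2 \<Rightarrow> real"
  assumes "open \<Omega>" and "convex \<Omega>" and "bounded \<Omega>" and "\<Omega> \<noteq> {}"
    and "d1 > 0" and "d2 > 0"
    and "L\<^sub>f-lipschitz_on UNIV f" and "L\<^sub>g-lipschitz_on UNIV g"
    and "\<forall>p. f p \<le> \<beta>\<^sub>f" and "\<forall>p. g p \<le> \<beta>\<^sub>g"
    and "\<sigma> > 0"
    and "rd_neumann_solution \<Omega> T d1 d2 c1 c2 f g U V"
  shows "\<exists>C. \<forall>(\<T> :: (real^2) set set) h \<tau> (n :: nat) un vn u1 v1
                 (uk :: nat \<Rightarrow> real^2 \<Rightarrow> real) (vk :: nat \<Rightarrow> real^2 \<Rightarrow> real).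
      conforming_triangulation \<Omega> \<T> \<and> quasi_uniform \<sigma> \<T> \<and> h = mesh_size \<T> \<and>
      \<tau> > 0 \<and> \<tau> * max \<beta>\<^sub>f \<beta>\<^sub>g < 1 \<and> real (Suc n) * \<tau> \<le> T \<and>
      un \<in> P1_space \<Omega> \<T> \<and> vn \<in> P1_space \<Omega> \<T> \<and>
      u1 \<in> P1_space \<Omega> \<T> \<and> v1 \<in> P1_space \<Omega> \<T> \<and>
      fe_equation \<Omega> \<T> \<tau> d1 c1 (\<lambda>x. f (u1 x, v1 x)) un u1 \<and>
      fe_equation \<Omega> \<T> \<tau> d2 c2 (\<lambda>x. g (u1 x, v1 x)) vn v1 \<and>
      (\<forall>k. uk k \<in> P1_space \<Omega> \<T> \<and> vk k \<in> P1_space \<Omega> \<T>) \<and>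
      (\<forall>k. fe_equation \<Omega> \<T> \<tau> d1 c1 (\<lambda>x. f (uk k x, vk k x)) un (uk (Suc k)) \<and>
           fe_equation \<Omega> \<T> \<tau> d2 c2 (\<lambda>x. g (uk k x, vk k x)) vn (vk (Suc k))) \<and>
      (\<forall>x\<in>\<Omega>. u1 x > 0 \<and> v1 x > 0 \<and> (\<forall>k. uk k x > 0 \<and> vk k x > 0)) \<and>
      (\<forall>x\<in>\<Omega>. \<bar>U (real (Suc n) * \<tau>) x - u1 x\<bar> \<le> C' * (h\<^sup>2 + \<tau>) \<and>
               \<bar>V (real (Suc n) * \<tau>) x - v1 x\<bar> \<le> C' * (h\<^sup>2 + \<tau>))
      \<longrightarrow> (\<forall>k. pair_l2_norm \<Omega> (\<lambda>x. uk (Suc k) x - u1 x) (\<lambda>x. vk (Suc k) x - v1 x)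
               \<le> (C * max L\<^sub>f L\<^sub>g * (\<tau> / (1 - \<tau> * max \<beta>\<^sub>f \<beta>\<^sub>g)) * (1 + C' * (\<tau> + h\<^sup>2)))
                 * pair_l2_norm \<Omega> (\<lambda>x. uk k x - u1 x) (\<lambda>x. vk k x - v1 x))"
proof -
  note sol = assms(12)[unfolded rd_neumann_solution_def]
  have cU: "continuous_on ({0..T} \<times> closure \<Omega>) (\<lambda>(t, x). U t x)"
    and cV: "continuous_on ({0..T} \<times> closure \<Omega>) (\<lambda>(t, x). V t x)" using sol by auto
  have cpt: "compact ({0..T} \<times> closure \<Omega>)"
    using assms(3) by (intro compact_Times) (auto simp: compact_closure)
  obtain MU where MU: "\<And>y. y \<in> (\<lambda>(t, x). U t x) ` ({0..T} \<times> closure \<Omega>) \<Longrightarrow> norm y \<le> MU"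
    using compact_imp_bounded[OF compact_continuous_image[OF cU cpt]] unfolding bounded_iff by blast
  obtain MV where MV: "\<And>y. y \<in> (\<lambda>(t, x). V t x) ` ({0..T} \<times> closure \<Omega>) \<Longrightarrow> norm y \<le> MV"
    using compact_imp_bounded[OF compact_continuous_image[OF cV cpt]] unfolding bounded_iff by blast
  define M where "M = max (max MU MV) 0"
  have M0: "M \<ge> 0" unfolding M_def by simp
  have UM: "\<bar>U t x\<bar> \<le> M" if "t \<in> {0..T}" "x \<in> closure \<Omega>" for t x
  proof -
    have "norm (U t x) \<le> MU" by (rule MU) (use that in force)
    then show ?thesis unfolding M_def by simp
  qed
  have VM: "\<bar>V t x\<bar> \<le> M" if "t \<in> {0..T}" "x \<in> closure \<Omega>" for t x
  proof -
    have "norm (V t x) \<le> MV" by (rule MV) (use that in force)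
    then show ?thesis unfolding M_def by simp
  qed
  have fc: "continuous_on UNIV f" by (rule lipschitz_on_continuous_on[OF assms(7)])
  have gc: "continuous_on UNIV g" by (rule lipschitz_on_continuous_on[OF assms(8)])
  define Lm where "Lm = max L\<^sub>f L\<^sub>g"
  define \<beta> where "\<beta> = max \<beta>\<^sub>f \<beta>\<^sub>g"
  have Lf0: "L\<^sub>f \<ge> 0" by (rule lipschitz_on_nonneg[OF assms(7)])
  have Lm0: "Lm \<ge> 0" unfolding Lm_def using Lf0 by simp
  have flip: "\<bar>f p - f q\<bar> \<le> Lm * dist p q" for p q
  proof -
    have "dist (f p) (f q) \<le> L\<^sub>f * dist p q" by (rule lipschitz_onD[OF assms(7)]) auto
    also have "\<dots> \<le> Lm * dist p q" unfolding Lm_def by (intro mult_right_mono) auto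
    finally show ?thesis by (simp add: dist_real_def)
  qed
  have glip: "\<bar>g p - g q\<bar> \<le> Lm * dist p q" for p q
  proof -
    have "dist (g p) (g q) \<le> L\<^sub>g * dist p q" by (rule lipschitz_onD[OF assms(8)]) auto
    also have "\<dots> \<le> Lm * dist p q" unfolding Lm_def by (intro mult_right_mono) auto
    finally show ?thesis by (simp add: dist_real_def)
  qed
  show ?thesis
  proof (rule exI[of _ "sqrt 2 * (M + 1)"], intro allI impI, elim conjE)
    fix \<T> :: "(real^2) set set" and h \<tau> :: real and n :: nat and un vn u1 v1 :: "real^2 \<Rightarrow> real"
      and uk vk :: "nat \<Rightarrow> real^2 \<Rightarrow> real" and k :: nat
    assume tri: "conforming_triangulation \<Omega> \<T>" and "quasi_uniform \<sigma> \<T>" and "h = mesh_size \<T>"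
      and tau: "\<tau> > 0" and tb: "\<tau> * max \<beta>\<^sub>f \<beta>\<^sub>g < 1" and tT: "real (Suc n) * \<tau> \<le> T"
      and Pun: "un \<in> P1_space \<Omega> \<T>" and Pvn: "vn \<in> P1_space \<Omega> \<T>"
      and Pu1: "u1 \<in> P1_space \<Omega> \<T>" and Pv1: "v1 \<in> P1_space \<Omega> \<T>"
      and equ: "fe_equation \<Omega> \<T> \<tau> d1 c1 (\<lambda>x. f (u1 x, v1 x)) un u1"
      and eqv: "fe_equation \<Omega> \<T> \<tau> d2 c2 (\<lambda>x. g (u1 x, v1 x)) vn v1"
      and Pk: "\<forall>k. uk k \<in> P1_space \<Omega> \<T> \<and> vk k \<in> P1_space \<Omega> \<T>"
      and eqk: "\<forall>k. fe_equation \<Omega> \<T> \<tau> d1 c1 (\<lambda>x. f (uk k x, vk k x)) un (uk (Suc k)) \<and>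
           fe_equation \<Omega> \<T> \<tau> d2 c2 (\<lambda>x. g (uk k x, vk k x)) vn (vk (Suc k))"
      and "\<forall>x\<in>\<Omega>. u1 x > 0 \<and> v1 x > 0 \<and> (\<forall>k. uk k x > 0 \<and> vk k x > 0)"
      and err: "\<forall>x\<in>\<Omega>. \<bar>U (real (Suc n) * \<tau>) x - u1 x\<bar> \<le> C' * (h\<^sup>2 + \<tau>) \<and>
               \<bar>V (real (Suc n) * \<tau>) x - v1 x\<bar> \<le> C' * (h\<^sup>2 + \<tau>)"
      define t where "t = real (Suc n) * \<tau>"
      have t: "t \<in> {0..T}" unfolding t_def using tau tT by simp
      define s where "s = \<tau> + h\<^sup>2"
      have s0: "s > 0" unfolding s_def using tau by (simp add: add_pos_nonneg)
      obtain x0 where x0: "x0 \<in> \<Omega>" using assms(4) by blast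
      have "0 \<le> C' * s" using err x0 unfolding s_def by (smt (verit) abs_ge_zero add.commute)
      then have C0: "C' \<ge> 0" using s0 by (simp add: zero_le_mult_iff)
      have u1b: "\<bar>u1 x\<bar> \<le> M + C' * s" if x: "x \<in> \<Omega>" for x
      proof -
        have a: "\<bar>U t x\<bar> \<le> M" using UM[OF t] x closure_subset by blast
        have b: "\<bar>U t x - u1 x\<bar> \<le> C' * s" using err x unfolding t_def s_def by (simp add: add.commute)
        show ?thesis using a b unfolding abs_le_iff abs_diff_le_iff by linarith
      qed
      have v1b: "\<bar>v1 x\<bar> \<le> M + C' * s" if x: "x \<in> \<Omega>" for x
      proof -
        have a: "\<bar>V t x\<bar> \<le> M" using VM[OF t] x closure_subset by blast
        have b: "\<bar>V t x - v1 x\<bar> \<le> C' * s" using err x unfolding t_def s_def by (simp add: add.commute)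
        show ?thesis using a b unfolding abs_le_iff abs_diff_le_iff by linarith
      qed
      have Mp0: "M + C' * s \<ge> 0" using M0 C0 s0 by simp
      have Puk: "uk k \<in> P1_space \<Omega> \<T>" "vk k \<in> P1_space \<Omega> \<T>"
        "uk (Suc k) \<in> P1_space \<Omega> \<T>" "vk (Suc k) \<in> P1_space \<Omega> \<T>" using Pk by auto
      have cuk: "continuous_on (closure \<Omega>) (uk k)" "continuous_on (closure \<Omega>) (vk k)"
        and cu1: "continuous_on (closure \<Omega>) u1" "continuous_on (closure \<Omega>) v1"
        using Puk Pu1 Pv1 by (auto intro: P1_cont)
      define R where "R x = dist (uk k x, vk k x) (u1 x, v1 x)" for x
      have cR: "continuous_on (closure \<Omega>) R" unfolding R_def
        by (intro continuous_intros cuk cu1)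
      have cpair1: "continuous_on (closure \<Omega>) (\<lambda>x. (u1 x, v1 x))" by (intro continuous_intros cu1)
      have cpairk: "continuous_on (closure \<Omega>) (\<lambda>x. (uk k x, vk k x))" by (intro continuous_intros cuk)
      have cF: "continuous_on (closure \<Omega>) (\<lambda>x. f (u1 x, v1 x))"
        by (rule continuous_on_compose2[OF fc cpair1]) auto
      have cFk: "continuous_on (closure \<Omega>) (\<lambda>x. f (uk k x, vk k x))"
        by (rule continuous_on_compose2[OF fc cpairk]) auto
      have cG: "continuous_on (closure \<Omega>) (\<lambda>x. g (u1 x, v1 x))"
        by (rule continuous_on_compose2[OF gc cpair1]) auto
      have cGk: "continuous_on (closure \<Omega>) (\<lambda>x. g (uk k x, vk k x))"
        by (rule continuous_on_compose2[OF gc cpairk]) auto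
      have hu: "(1 / \<tau> - \<beta>) * sqrt (LINT x:\<Omega>|lebesgue. (uk (Suc k) x - u1 x) * (uk (Suc k) x - u1 x))
         \<le> Lm * (M + C' * s) * sqrt (LINT x:\<Omega>|lebesgue. R x * R x)"
      proof (rule component[OF tri assms(1) assms(3) assms(5) tau Pun Pu1 Puk(3) cF cFk cR equ])
        show "fe_equation \<Omega> \<T> \<tau> d1 c1 (\<lambda>x. f (uk k x, vk k x)) un (uk (Suc k))" using eqk by blast
        show "f (uk k x, vk k x) \<le> \<beta>" for x using assms(9) unfolding \<beta>_def by (meson max.coboundedI1)
        show "\<bar>f (uk k x, vk k x) - f (u1 x, v1 x)\<bar> \<le> Lm * R x" for x unfolding R_def by (rule flip)
      qed (use u1b Lm0 Mp0 in auto)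
      have hv: "(1 / \<tau> - \<beta>) * sqrt (LINT x:\<Omega>|lebesgue. (vk (Suc k) x - v1 x) * (vk (Suc k) x - v1 x))
         \<le> Lm * (M + C' * s) * sqrt (LINT x:\<Omega>|lebesgue. R x * R x)"
      proof (rule component[OF tri assms(1) assms(3) assms(6) tau Pvn Pv1 Puk(4) cG cGk cR eqv])
        show "fe_equation \<Omega> \<T> \<tau> d2 c2 (\<lambda>x. g (uk k x, vk k x)) vn (vk (Suc k))" using eqk by blast
        show "g (uk k x, vk k x) \<le> \<beta>" for x using assms(10) unfolding \<beta>_def by (meson max.coboundedI2)
        show "\<bar>g (uk k x, vk k x) - g (u1 x, v1 x)\<bar> \<le> Lm * R x" for x unfolding R_def by (rule glip)
      qed (use v1b Lm0 Mp0 in auto)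
      define Au where "Au = (LINT x:\<Omega>|lebesgue. (uk (Suc k) x - u1 x) * (uk (Suc k) x - u1 x))"
      define Av where "Av = (LINT x:\<Omega>|lebesgue. (vk (Suc k) x - v1 x) * (vk (Suc k) x - v1 x))"
      define Du where "Du = (LINT x:\<Omega>|lebesgue. (uk k x - u1 x) * (uk k x - u1 x))"
      define Dv where "Dv = (LINT x:\<Omega>|lebesgue. (vk k x - v1 x) * (vk k x - v1 x))"
      define P where "P = (LINT x:\<Omega>|lebesgue. R x * R x)"
      have Au0: "Au \<ge> 0" unfolding Au_def by (rule set_int_nonneg) simp
      have Av0: "Av \<ge> 0" unfolding Av_def by (rule set_int_nonneg) simp
      have Du0: "Du \<ge> 0" unfolding Du_def by (rule set_int_nonneg) simp
      have Dv0: "Dv \<ge> 0" unfolding Dv_def by (rule set_int_nonneg) simp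
      have P0: "P \<ge> 0" unfolding P_def by (rule set_int_nonneg) simp
      have RR: "R x * R x = (uk k x - u1 x) * (uk k x - u1 x) + (vk k x - v1 x) * (vk k x - v1 x)" for x
        unfolding R_def dist_Pair_Pair dist_real_def
        by (simp add: power2_eq_square[symmetric])
      have iu: "set_integrable lebesgue \<Omega> (\<lambda>x. (uk k x - u1 x) * (uk k x - u1 x))"
        by (intro cont_integrable[OF assms(1,3)] continuous_intros cuk cu1)
      have iv: "set_integrable lebesgue \<Omega> (\<lambda>x. (vk k x - v1 x) * (vk k x - v1 x))"
        by (intro cont_integrable[OF assms(1,3)] continuous_intros cuk cu1)
      have PD: "P = Du + Dv" unfolding P_def Du_def Dv_def RR
        by (rule set_integral_add(2)[OF iu iv])
      have new: "pair_l2_norm \<Omega> (\<lambda>x. uk (Suc k) x - u1 x) (\<lambda>x. vk (Suc k) x - v1 x) = sqrt (Au + Av)"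
        unfolding pair_l2_norm_def l2_norm_def l2_inner_def Au_def[symmetric] Av_def[symmetric]
        using Au0 Av0 by simp
      have old: "pair_l2_norm \<Omega> (\<lambda>x. uk k x - u1 x) (\<lambda>x. vk k x - v1 x) = sqrt P"
        unfolding pair_l2_norm_def l2_norm_def l2_inner_def Du_def[symmetric] Dv_def[symmetric] PD
        using Du0 Dv0 by simp
      have tb': "\<tau> * \<beta> < 1" using tb unfolding \<beta>_def .
      have fin: "sqrt (Au + Av) \<le> (sqrt 2 * (M + 1) * Lm * (\<tau> / (1 - \<tau> * \<beta>)) * (1 + C' * s)) * sqrt P"
        by (rule final_real[OF Au0 Av0 P0 Lm0 M0 C0 less_imp_le[OF s0] tau tb'])
           (use hu hv in \<open>simp_all add: Au_def Av_def P_def\<close>)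
      show "pair_l2_norm \<Omega> (\<lambda>x. uk (Suc k) x - u1 x) (\<lambda>x. vk (Suc k) x - v1 x)
               \<le> (sqrt 2 * (M + 1) * max L\<^sub>f L\<^sub>g * (\<tau> / (1 - \<tau> * max \<beta>\<^sub>f \<beta>\<^sub>g)) * (1 + C' * (\<tau> + h\<^sup>2)))
                 * pair_l2_norm \<Omega> (\<lambda>x. uk k x - u1 x) (\<lambda>x. vk k x - v1 x)"
        unfolding new old using fin unfolding Lm_def \<beta>_def s_def .
  qed
qed

end
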